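(* For every integer $n\ge 2$, with $$q(n,k)=\sum_{\overline{A}\in\overline{\mathfrak{B}}_{n,k}}|\overline{A}|\prod_{i=0}^{n-2}\left[(n-i)!\right]^{\psi_i(\overline{A})},$$ one has $q(n,0)=q(n,1)=(n!)^{2n}=|\Pi_n|=|\Sigma_{n^2}|$.
   Context: $[n]=\{1,\dots,n\}$. $\mathfrak{B}_n$ is the set of $n\times n$ binary matrices and $\mathfrak{B}_{n,k}$ those with exactly $k$ ones. For $A\in\mathfrak{B}_n$, $r_k(A)$ (resp. $c_k(A)$) is the number of rows (resp. columns) of $A$ with exactly $k$ ones and $\psi_k(A)=r_k(A)+c_k(A)$. $A\sim B$ iff $B$ is obtained from $A$ by permuting rows; $\overline{A}$ is the equivalence class of $A$, $|\overline{A}|$ its cardinality, $\overline{\mathfrak{B}}_{n,k}=\mathfrak{B}_{n,k}/\!\sim$; $\psi_k$ is defined on classes via representatives. $\Pi_n$ is the set of all $n\times n$ matrices whose entries are ordered pairs $\langle i,j\rangle$, $i,j\in[n]$, such that in each row the first coordinates form a permutation of $[n]$ and in each column the second coordinates form a permutation of $[n]$. $\Sigma_{n^2}$ is the set of $n^2\times n^2$ binary matrices which, when partitioned into $n^2$ consecutive $n\times n$ blocks, contain exactly one $1$ in each row, each column and each block. *)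

theory Defs
  imports "HOL-Combinatorics.Permutations"
begin

text \<open>Matrices are indexed by [n] = {1..n}; an n x n matrix is a function on
  nat x nat that takes a fixed default value outside [n] x [n].\<close>

definition binmats :: "nat \<Rightarrow> (nat \<Rightarrow> nat \<Rightarrow> bool) set" where
  "binmats n = {A. \<forall>i j. A i j \<longrightarrow> i \<in> {1..n} \<and> j \<in> {1..n}}"

definition ones :: "nat \<Rightarrow> (nat \<Rightarrow> nat \<Rightarrow> bool) \<Rightarrow> nat" where
  "ones n A = card {(i, j). i \<in> {1..n} \<and> j \<in> {1..n} \<and> A i j}"

definition binmats_k :: "nat \<Rightarrow> nat \<Rightarrow> (nat \<Rightarrow> nat \<Rightarrow> bool) set" where
  "binmats_k n k = {A \<in> binmats n. ones n A = k}"

definition row_count :: "nat \<Rightarrow> nat \<Rightarrow> (nat \<Rightarrow> nat \<Rightarrow> bool) \<Rightarrow> nat" where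
  "row_count n k A = card {i \<in> {1..n}. card {j \<in> {1..n}. A i j} = k}"

definition col_count :: "nat \<Rightarrow> nat \<Rightarrow> (nat \<Rightarrow> nat \<Rightarrow> bool) \<Rightarrow> nat" where
  "col_count n k A = card {j \<in> {1..n}. card {i \<in> {1..n}. A i j} = k}"

definition psi :: "nat \<Rightarrow> nat \<Rightarrow> (nat \<Rightarrow> nat \<Rightarrow> bool) \<Rightarrow> nat" where
  "psi n k A = row_count n k A + col_count n k A"

definition row_equiv :: "nat \<Rightarrow> (nat \<Rightarrow> nat \<Rightarrow> bool) \<Rightarrow> (nat \<Rightarrow> nat \<Rightarrow> bool) \<Rightarrow> bool" where
  "row_equiv n A B \<longleftrightarrow> (\<exists>\<sigma>. \<sigma> permutes {1..n} \<and> (\<forall>i j. B i j = A (\<sigma> i) j))"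

definition row_rel :: "nat \<Rightarrow> nat \<Rightarrow> ((nat \<Rightarrow> nat \<Rightarrow> bool) \<times> (nat \<Rightarrow> nat \<Rightarrow> bool)) set" where
  "row_rel n k = {(A, B). A \<in> binmats_k n k \<and> B \<in> binmats_k n k \<and> row_equiv n A B}"

definition classes :: "nat \<Rightarrow> nat \<Rightarrow> (nat \<Rightarrow> nat \<Rightarrow> bool) set set" where
  "classes n k = binmats_k n k // row_rel n k"

definition psi_cls :: "nat \<Rightarrow> nat \<Rightarrow> (nat \<Rightarrow> nat \<Rightarrow> bool) set \<Rightarrow> nat" where
  "psi_cls n k X = psi n k (SOME A. A \<in> X)"

definition q :: "nat \<Rightarrow> nat \<Rightarrow> nat" where
  "q n k = (\<Sum>X\<in>classes n k. card X * (\<Prod>i = 0..n - 2. (fact (n - i)) ^ psi_cls n i X))"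

definition Pi_mats :: "nat \<Rightarrow> (nat \<Rightarrow> nat \<Rightarrow> nat \<times> nat) set" where
  "Pi_mats n = {M. (\<forall>i j. \<not> (i \<in> {1..n} \<and> j \<in> {1..n}) \<longrightarrow> M i j = (0, 0))
     \<and> (\<forall>i j. i \<in> {1..n} \<and> j \<in> {1..n} \<longrightarrow> fst (M i j) \<in> {1..n} \<and> snd (M i j) \<in> {1..n})
     \<and> (\<forall>i \<in> {1..n}. bij_betw (\<lambda>j. fst (M i j)) {1..n} {1..n})
     \<and> (\<forall>j \<in> {1..n}. bij_betw (\<lambda>i. snd (M i j)) {1..n} {1..n})}"

definition Sigma_mats :: "nat \<Rightarrow> (nat \<Rightarrow> nat \<Rightarrow> bool) set" where
  "Sigma_mats n = {A \<in> binmats (n^2).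
     (\<forall>i \<in> {1..n^2}. card {j \<in> {1..n^2}. A i j} = 1)
     \<and> (\<forall>j \<in> {1..n^2}. card {i \<in> {1..n^2}. A i j} = 1)
     \<and> (\<forall>a \<in> {1..n}. \<forall>b \<in> {1..n}.
          card {(i, j). i \<in> {(a - 1) * n + 1 .. a * n} \<and> j \<in> {(b - 1) * n + 1 .. b * n} \<and> A i j} = 1)}"

end

theory Submission
  imports Defs "HOL-Library.FuncSet"
begin


definition perms :: "nat \<Rightarrow> (nat \<Rightarrow> nat) set" where
  "perms n = {p. p permutes {1..n}}"

lemma card_perms: "card (perms n) = fact n"
  unfolding perms_def by (rule card_permutations) auto

lemma card_Pi_mats: "card (Pi_mats n) = fact n ^ (2 * n)"
proof -
  define F where "F = (PiE {1..n} (\<lambda>_. perms n)) \<times> (PiE {1..n} (\<lambda>_. perms n))"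
  have cF: "card F = fact n ^ (2 * n)"
    unfolding F_def by (simp add: card_cartesian_product card_PiE card_perms power_add mult_2 flip: power_mult)
  define h where "h = (\<lambda>M::nat\<Rightarrow>nat\<Rightarrow>nat\<times>nat. ((\<lambda>i\<in>{1..n}. \<lambda>j. if j\<in>{1..n} then fst (M i j) else j),
        (\<lambda>j\<in>{1..n}. \<lambda>i. if i\<in>{1..n} then snd (M i j) else i)))"
  define k where "k = (\<lambda>(P::nat\<Rightarrow>nat\<Rightarrow>nat,Q::nat\<Rightarrow>nat\<Rightarrow>nat). \<lambda>i j. if i\<in>{1..n} \<and> j\<in>{1..n} then (P i j, Q j i) else (0::nat,0::nat))"
  have "bij_betw h (Pi_mats n) F"
  proof (rule bij_betw_byWitness[where f'=k])
    show "\<forall>M\<in>Pi_mats n. k (h M) = M"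
      by (auto simp: Pi_mats_def h_def k_def fun_eq_iff)
    show "\<forall>PQ\<in>F. h (k PQ) = PQ"
    proof
      fix PQ assume "PQ \<in> F"
      then obtain P Q where PQ: "PQ = (P,Q)" "P \<in> PiE {1..n} (\<lambda>_. perms n)" "Q \<in> PiE {1..n} (\<lambda>_. perms n)"
        unfolding F_def by auto
      have fix1: "\<And>i j. i \<in> {1..n} \<Longrightarrow> j \<notin> {1..n} \<Longrightarrow> P i j = j"
        using PQ(2) unfolding perms_def by (auto simp: permutes_def)
      have fix2: "\<And>i j. j \<in> {1..n} \<Longrightarrow> i \<notin> {1..n} \<Longrightarrow> Q j i = i"
        using PQ(3) unfolding perms_def by (auto simp: permutes_def)
      have "h (k (P,Q)) = (P,Q)"
        using PQ(2,3) fix1 fix2 unfolding h_def k_def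
        by (auto simp: fun_eq_iff PiE_def extensional_def)
      then show "h (k PQ) = PQ" using PQ by simp
    qed
    show "h ` Pi_mats n \<subseteq> F"
    proof
      fix X assume "X \<in> h ` Pi_mats n"
      then obtain M where M: "M \<in> Pi_mats n" "X = h M" by auto
      have 1: "(\<lambda>j. if j\<in>{1..n} then fst (M i j) else j) \<in> perms n" if "i \<in> {1..n}" for i
      proof -
        have "bij_betw (\<lambda>j. fst (M i j)) {1..n} {1..n}" using M(1) that unfolding Pi_mats_def by auto
        then have "bij_betw (\<lambda>j. if j\<in>{1..n} then fst (M i j) else j) {1..n} {1..n}"
          by (rule bij_betw_cong[THEN iffD1, rotated]) auto
        then show ?thesis unfolding perms_def by (auto intro: bij_imp_permutes)
      qed
      have 2: "(\<lambda>i. if i\<in>{1..n} then snd (M i j) else i) \<in> perms n" if "j \<in> {1..n}" for j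
      proof -
        have "bij_betw (\<lambda>i. snd (M i j)) {1..n} {1..n}" using M(1) that unfolding Pi_mats_def by auto
        then have "bij_betw (\<lambda>i. if i\<in>{1..n} then snd (M i j) else i) {1..n} {1..n}"
          by (rule bij_betw_cong[THEN iffD1, rotated]) auto
        then show ?thesis unfolding perms_def by (auto intro: bij_imp_permutes)
      qed
      show "X \<in> F" using 1 2 unfolding M(2) h_def F_def by auto
    qed
    show "k ` F \<subseteq> Pi_mats n"
    proof
      fix X assume "X \<in> k ` F"
      then obtain P Q where PQ: "X = k (P,Q)" "P \<in> PiE {1..n} (\<lambda>_. perms n)" "Q \<in> PiE {1..n} (\<lambda>_. perms n)"
        unfolding F_def by auto
      have bP: "bij_betw (P i) {1..n} {1..n}" if "i \<in> {1..n}" for i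
        using PQ(2) that unfolding perms_def by (auto intro: permutes_imp_bij)
      have bQ: "bij_betw (Q i) {1..n} {1..n}" if "i \<in> {1..n}" for i
        using PQ(3) that unfolding perms_def by (auto intro: permutes_imp_bij)
      have X: "X i j = (if i\<in>{1..n} \<and> j\<in>{1..n} then (P i j, Q j i) else (0,0))" for i j
        unfolding PQ(1) k_def by simp
      have c2: "\<forall>i j. i \<in> {1..n} \<and> j \<in> {1..n} \<longrightarrow> fst (X i j) \<in> {1..n} \<and> snd (X i j) \<in> {1..n}"
      proof (intro allI impI)
        fix i j assume ij: "i \<in> {1..n} \<and> j \<in> {1..n}"
        have "P i j \<in> {1..n}" using bij_betwE[OF bP] ij by blast
        moreover have "Q j i \<in> {1..n}" using bij_betwE[OF bQ] ij by blast
        ultimately show "fst (X i j) \<in> {1..n} \<and> snd (X i j) \<in> {1..n}" using ij X by simp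
      qed
      have c3: "\<forall>i \<in> {1..n}. bij_betw (\<lambda>j. fst (X i j)) {1..n} {1..n}"
      proof
        fix i assume i: "i \<in> {1..n}"
        show "bij_betw (\<lambda>j. fst (X i j)) {1..n} {1..n}"
          using bP[OF i] by (rule bij_betw_cong[THEN iffD1, rotated]) (use i X in auto)
      qed
      have c4: "\<forall>j \<in> {1..n}. bij_betw (\<lambda>i. snd (X i j)) {1..n} {1..n}"
      proof
        fix j assume j: "j \<in> {1..n}"
        show "bij_betw (\<lambda>i. snd (X i j)) {1..n} {1..n}"
          using bQ[OF j] by (rule bij_betw_cong[THEN iffD1, rotated]) (use j X in auto)
      qed
      have c1: "\<forall>i j. \<not> (i \<in> {1..n} \<and> j \<in> {1..n}) \<longrightarrow> X i j = (0, 0)" using X by simp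
      show "X \<in> Pi_mats n" unfolding Pi_mats_def using c1 c2 c3 c4 by blast
    qed
  qed
  then show ?thesis using cF bij_betw_same_card by metis
qed



lemma prod_split0: "(\<Prod>i = 0..m. f i) = f 0 * (\<Prod>i = 1..m. f i)" for f :: "nat \<Rightarrow> nat"
  using prod.atLeast_Suc_atMost[of 0 m f] by simp

lemma q0: assumes "n \<ge> 2" shows "q n 0 = fact n ^ (2 * n)"
proof -
  define Z where "Z = (\<lambda>(i::nat) (j::nat). False)"
  have bk: "binmats_k n 0 = {Z}"
  proof
    show "binmats_k n 0 \<subseteq> {Z}"
    proof
      fix A assume A: "A \<in> binmats_k n 0"
      have fin: "finite {(i, j). i \<in> {1..n} \<and> j \<in> {1..n} \<and> A i j}"
        by (rule finite_subset[of _ "{1..n} \<times> {1..n}"]) auto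
      have "{(i, j). i \<in> {1..n} \<and> j \<in> {1..n} \<and> A i j} = {}"
        using A fin unfolding binmats_k_def ones_def by (simp only: mem_Collect_eq card_0_eq)
      moreover have "\<forall>i j. A i j \<longrightarrow> i \<in> {1..n} \<and> j \<in> {1..n}" using A unfolding binmats_k_def binmats_def by blast
      ultimately have "A = Z" unfolding Z_def by (intro ext) blast
      then show "A \<in> {Z}" by simp
    qed
    show "{Z} \<subseteq> binmats_k n 0"
      unfolding binmats_k_def binmats_def ones_def Z_def by simp
  qed
  have idp: "id permutes {1..n}" by (rule permutes_id)
  have rr: "row_rel n 0 `` {Z} = {Z}"
  proof
    show "row_rel n 0 `` {Z} \<subseteq> {Z}" unfolding row_rel_def bk by blast
    have "(Z, Z) \<in> row_rel n 0" unfolding row_rel_def bk row_equiv_def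
      by (simp add: Z_def) (metis permutes_id)
    then show "{Z} \<subseteq> row_rel n 0 `` {Z}" by blast
  qed
  have cl: "classes n 0 = {{Z}}"
    unfolding classes_def bk quotient_def using rr by simp
  have ps: "psi_cls n i {Z} = psi n i Z" for i unfolding psi_cls_def by simp
  have e: "{i. Suc 0 \<le> i \<and> i \<le> n} = {1..n}" by auto
  have p0: "psi n 0 Z = 2 * n" unfolding psi_def row_count_def col_count_def Z_def by (simp add: e)
  have p1: "psi n i Z = 0" if "i \<ge> 1" for i
    using that unfolding psi_def row_count_def col_count_def Z_def by simp
  have "(\<Prod>i = 0..n - 2. fact (n - i) ^ psi n i Z) = (fact n::nat) ^ (2*n) * (\<Prod>i = 1..n - 2. fact (n - i) ^ psi n i Z)"
    by (subst prod_split0) (simp add: p0)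
  also have "(\<Prod>i = 1..n - 2. fact (n - i) ^ psi n i Z) = (1::nat)"
    by (rule prod.neutral) (simp add: p1)
  finally show ?thesis unfolding q_def cl by (simp add: ps)
qed



definition E :: "nat \<Rightarrow> nat \<Rightarrow> nat \<Rightarrow> nat \<Rightarrow> bool" where
  "E a b = (\<lambda>i j. i = a \<and> j = b)"

lemma E_in: assumes "a \<in> {1..n}" "b \<in> {1..n}" shows "E a b \<in> binmats_k n 1"
proof -
  have "{(i, j). i \<in> {1..n} \<and> j \<in> {1..n} \<and> E a b i j} = {(a,b)}"
    using assms unfolding E_def by auto
  then show ?thesis using assms unfolding binmats_k_def binmats_def ones_def E_def by auto
qed

lemma binmats_k1: assumes "A \<in> binmats_k n 1" shows "\<exists>a\<in>{1..n}. \<exists>b\<in>{1..n}. A = E a b"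
proof -
  have c: "card {(i, j). i \<in> {1..n} \<and> j \<in> {1..n} \<and> A i j} = 1"
    using assms unfolding binmats_k_def ones_def by blast
  have bm: "\<forall>i j. A i j \<longrightarrow> i \<in> {1..n} \<and> j \<in> {1..n}" using assms unfolding binmats_k_def binmats_def by blast
  obtain x where x: "{(i, j). i \<in> {1..n} \<and> j \<in> {1..n} \<and> A i j} = {x}"
    using card_1_singletonE[OF c] by blast
  obtain a b where ab: "x = (a,b)" by (cases x)
  have "(a,b) \<in> {(i, j). i \<in> {1..n} \<and> j \<in> {1..n} \<and> A i j}" using x ab by simp
  then have abn: "a \<in> {1..n}" "b \<in> {1..n}" by auto
  have "A = E a b"
  proof (intro ext)
    fix i j
    show "A i j = E a b i j"
    proof
      assume "A i j"
      then have "(i,j) \<in> {(i, j). i \<in> {1..n} \<and> j \<in> {1..n} \<and> A i j}" using bm by auto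
      then show "E a b i j" using x ab unfolding E_def by auto
    next
      assume "E a b i j"
      then have "(i,j) = (a,b)" unfolding E_def by auto
      then have "(i,j) \<in> {(i, j). i \<in> {1..n} \<and> j \<in> {1..n} \<and> A i j}" using x ab by simp
      then show "A i j" by simp
    qed
  qed
  then show ?thesis using abn by blast
qed

definition Cl :: "nat \<Rightarrow> nat \<Rightarrow> (nat \<Rightarrow> nat \<Rightarrow> bool) set" where
  "Cl n b = (\<lambda>a. E a b) ` {1..n}"

lemma rel_E: assumes "a \<in> {1..n}" "b \<in> {1..n}" shows "row_rel n 1 `` {E a b} = Cl n b"
proof
  show "row_rel n 1 `` {E a b} \<subseteq> Cl n b"
  proof
    fix B assume "B \<in> row_rel n 1 `` {E a b}"
    then obtain \<sigma> where s: "\<sigma> permutes {1..n}" "\<forall>i j. B i j = E a b (\<sigma> i) j"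
      unfolding row_rel_def row_equiv_def by auto
    have "B = E (inv \<sigma> a) b"
    proof (intro ext)
      fix i j
      have "(\<sigma> i = a) = (i = inv \<sigma> a)" using permutes_inv_eq[OF s(1), of a i] by auto
      then show "B i j = E (inv \<sigma> a) b i j" using s(2) unfolding E_def by simp
    qed
    moreover have "inv \<sigma> a \<in> {1..n}"
      using permutes_in_image[OF permutes_inv[OF s(1)]] assms(1) by blast
    ultimately show "B \<in> Cl n b" unfolding Cl_def by blast
  qed
  show "Cl n b \<subseteq> row_rel n 1 `` {E a b}"
  proof
    fix B assume "B \<in> Cl n b"
    then obtain a' where a': "a' \<in> {1..n}" "B = E a' b" unfolding Cl_def by blast
    have p: "Transposition.transpose a a' permutes {1..n}" using assms(1) a'(1) by (rule permutes_swap_id)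
    have "\<forall>i j. B i j = E a b (Transposition.transpose a a' i) j"
      unfolding a'(2) E_def by (auto simp: transpose_eq_iff)
    then have "row_equiv n (E a b) B" unfolding row_equiv_def using p by blast
    then show "B \<in> row_rel n 1 `` {E a b}"
      unfolding row_rel_def using E_in[OF assms] E_in[OF a'(1) assms(2)] a'(2) by blast
  qed
qed

lemma classes1: assumes "n \<ge> 1" shows "classes n 1 = Cl n ` {1..n}"
proof
  show "classes n 1 \<subseteq> Cl n ` {1..n}"
  proof
    fix X assume "X \<in> classes n 1"
    then obtain A where A: "A \<in> binmats_k n 1" "X = row_rel n 1 `` {A}"
      unfolding classes_def quotient_def by blast
    then obtain a b where "a \<in> {1..n}" "b \<in> {1..n}" "A = E a b" using binmats_k1 by blast
    then show "X \<in> Cl n ` {1..n}" using A rel_E by blast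
  qed
  show "Cl n ` {1..n} \<subseteq> classes n 1"
  proof
    fix X assume "X \<in> Cl n ` {1..n}"
    then obtain b where b: "b \<in> {1..n}" "X = Cl n b" by blast
    have 1: "1 \<in> {1..n}" using assms by simp
    have "X = row_rel n 1 `` {E 1 b}" using rel_E[OF 1 b(1)] b(2) by simp
    then show "X \<in> classes n 1" unfolding classes_def quotient_def using E_in[OF 1 b(1)] by blast
  qed
qed

lemma E_inj: "E a b = E a' b' \<longleftrightarrow> a = a' \<and> b = b'"
  unfolding E_def by (auto simp: fun_eq_iff)

lemma inj_Cl: "inj_on (Cl n) {1..n}"
proof (rule inj_onI)
  fix b b' assume b: "b \<in> {1..n}" "b' \<in> {1..n}" "Cl n b = Cl n b'"
  have "E 1 b \<in> Cl n b" using b(1) unfolding Cl_def by auto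
  then have "E 1 b \<in> Cl n b'" using b(3) by simp
  then show "b = b'" unfolding Cl_def by (auto simp: E_inj)
qed

lemma card_Cl: "card (Cl n b) = n"
proof -
  have "inj_on (\<lambda>a. E a b) {1..n}" by (rule inj_onI) (simp add: E_inj)
  then show ?thesis unfolding Cl_def by (simp add: card_image)
qed

lemma inner_card: assumes "b \<in> {1..n}" shows "card {j \<in> {1..n}. r = a \<and> j = b} = (if r = a then 1 else 0)"
proof (cases "r = a")
  case True
  then have "{j \<in> {1..n}. r = a \<and> j = b} = {b}" using assms by auto
  then show ?thesis using True by simp
next
  case False
  then show ?thesis by simp
qed

lemma count_aux: assumes "a \<in> {1..n}"
  shows "card {r \<in> {1..n}. (if r = a then 1 else 0::nat) = k} = (if k = 0 then n - 1 else if k = 1 then 1 else 0)"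
proof -
  consider "k = 0" | "k = 1" | "k \<ge> 2" by linarith
  then show ?thesis
  proof cases
    case 1
    then have "{r \<in> {1..n}. (if r = a then 1 else 0::nat) = k} = {1..n} - {a}" by auto
    then show ?thesis using 1 assms by simp
  next
    case 2
    then have "{r \<in> {1..n}. (if r = a then 1 else 0::nat) = k} = {a}" using assms by auto
    then show ?thesis using 2 by simp
  next
    case 3
    then have "{r \<in> {1..n}. (if r = a then 1 else 0::nat) = k} = {}" by auto
    then show ?thesis using 3 by simp
  qed
qed

lemma psi_E: assumes "a \<in> {1..n}" "b \<in> {1..n}"
  shows "psi n k (E a b) = (if k = 0 then 2 * (n - 1) else if k = 1 then 2 else 0)"
proof -
  have r: "row_count n k (E a b) = (if k = 0 then n - 1 else if k = 1 then 1 else 0)"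
  proof -
    have ic: "card {j \<in> {1..n}. E a b i j} = (if i = a then 1 else 0)" for i
      using inner_card[OF assms(2), of i a] unfolding E_def by simp
    have "{i \<in> {1..n}. card {j \<in> {1..n}. E a b i j} = k} = {r \<in> {1..n}. (if r = a then 1 else 0::nat) = k}"
      by (simp only: ic)
    then show ?thesis unfolding row_count_def using count_aux[OF assms(1)] by simp
  qed
  have c: "col_count n k (E a b) = (if k = 0 then n - 1 else if k = 1 then 1 else 0)"
  proof -
    have ic: "card {i \<in> {1..n}. i = a \<and> j = b} = (if j = b then 1 else 0)" for j
    proof (cases "j = b")
      case True
      then have "{i \<in> {1..n}. i = a \<and> j = b} = {a}" using assms(1) by auto
      then show ?thesis using True by simp
    qed simp
    have "{j \<in> {1..n}. card {i \<in> {1..n}. E a b i j} = k} = {r \<in> {1..n}. (if r = b then 1 else 0::nat) = k}"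
      unfolding E_def by (simp only: ic)
    then show ?thesis unfolding col_count_def using count_aux[OF assms(2)] by simp
  qed
  show ?thesis unfolding psi_def r c by auto
qed

lemma psi_cls_Cl: assumes "b \<in> {1..n}"
  shows "psi_cls n k (Cl n b) = (if k = 0 then 2 * (n - 1) else if k = 1 then 2 else 0)"
proof -
  have ne: "\<exists>A. A \<in> Cl n b" using assms unfolding Cl_def by auto
  have "(SOME A. A \<in> Cl n b) \<in> Cl n b" using someI_ex[OF ne] .
  then obtain a where a: "a \<in> {1..n}" "(SOME A. A \<in> Cl n b) = E a b" unfolding Cl_def by auto
  show ?thesis unfolding psi_cls_def a(2) using psi_E[OF a(1) assms] .
qed

lemma q1: assumes "n \<ge> 2" shows "q n 1 = fact n ^ (2 * n)"
proof -
  define f where "f = (\<lambda>i. (fact (n - i)::nat) ^ (if i = 0 then 2 * (n - 1) else if i = 1 then 2 else 0))"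
  define P where "P = (\<Prod>i = 0..n - 2. f i)"
  have "q n 1 = (\<Sum>b\<in>{1..n}. card (Cl n b) * (\<Prod>i = 0..n - 2. (fact (n - i)) ^ psi_cls n i (Cl n b)))"
  proof -
    have cl: "classes n 1 = Cl n ` {1..n}" using classes1 assms by simp
    show ?thesis unfolding q_def cl sum.reindex[OF inj_Cl] by (simp add: o_def)
  qed
  also have "\<dots> = (\<Sum>b\<in>{1..n}. n * P)"
    by (rule sum.cong) (simp_all add: card_Cl psi_cls_Cl P_def f_def)
  also have "\<dots> = n * n * P" by simp
  also have "P = fact n ^ (2 * (n - 1)) * fact (n - 1) ^ 2"
  proof -
    have "P = f 0 * prod f {Suc 0..n - 2}" unfolding P_def by (rule prod.atLeast_Suc_atMost) simp
    moreover have "f 0 = fact n ^ (2 * (n - 1))" unfolding f_def by simp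
    moreover have "prod f {Suc 0..n - 2} = fact (n - 1) ^ 2"
    proof (cases "n = 2")
      case True
      then show ?thesis by simp
    next
      case False
      then have le: "Suc 0 \<le> n - 2" using assms by simp
      have "prod f {Suc 0..n - 2} = f 1 * prod f {Suc (Suc 0)..n - 2}"
        using prod.atLeast_Suc_atMost[OF le] by simp
      moreover have "f 1 = fact (n - 1) ^ 2" unfolding f_def by simp
      moreover have "prod f {Suc (Suc 0)..n - 2} = 1"
        by (rule prod.neutral) (auto simp: f_def)
      ultimately show ?thesis by simp
    qed
    ultimately show ?thesis by simp
  qed
  finally have "q n 1 = n * n * (fact n ^ (2 * (n - 1)) * fact (n - 1) ^ 2)" .
  also have "\<dots> = (n * fact (n - 1)) ^ 2 * fact n ^ (2 * (n - 1))" by (simp add: power2_eq_square)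
  also have "n * fact (n - 1) = (fact n :: nat)" using assms by (cases n) auto
  also have "(fact n::nat) ^ 2 * fact n ^ (2 * (n - 1)) = fact n ^ (2 * n)"
  proof -
    have "2 + 2 * (n - 1) = 2 * n" using assms by simp
    then show ?thesis by (metis power_add)
  qed
  finally show ?thesis .
qed



definition bk :: "nat \<Rightarrow> nat \<Rightarrow> nat" where "bk n i = (i - 1) div n + 1"
definition lc :: "nat \<Rightarrow> nat \<Rightarrow> nat" where "lc n i = (i - 1) mod n + 1"
definition ps :: "nat \<Rightarrow> nat \<Rightarrow> nat \<Rightarrow> nat" where "ps n a r = (a - 1) * n + r"

lemma F1: assumes "n > 0" "i \<in> {1..n^2}"
  shows "bk n i \<in> {1..n}" "lc n i \<in> {1..n}" "ps n (bk n i) (lc n i) = i"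
proof -
  have "i - 1 < n * n" using assms by (simp add: power2_eq_square) linarith
  then have "(i - 1) div n < n" using assms(1) by (simp add: div_less_iff_less_mult)
  then show "bk n i \<in> {1..n}" unfolding bk_def by simp
  show "lc n i \<in> {1..n}" unfolding lc_def using assms(1) by (simp add: Suc_leI)
  have "(i - 1) div n * n + (i - 1) mod n = i - 1" by simp
  then show "ps n (bk n i) (lc n i) = i" unfolding ps_def bk_def lc_def using assms(2) by simp
qed

lemma F2: assumes "a \<in> {1..n}" "r \<in> {1..n}"
  shows "ps n a r \<in> {1..n^2}" "bk n (ps n a r) = a" "lc n (ps n a r) = r"
proof -
  have n: "n > 0" using assms by simp
  have e: "ps n a r - 1 = (a - 1) * n + (r - 1)" unfolding ps_def using assms by simp
  have "(a - 1) * n + r \<le> (a - 1) * n + n" using assms by simp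
  also have "\<dots> = a * n" using assms by (cases a) auto
  also have "\<dots> \<le> n * n" using assms by simp
  finally show "ps n a r \<in> {1..n^2}" unfolding ps_def using assms by (simp add: power2_eq_square)
  have r: "r - 1 < n" using assms by simp linarith
  have d: "((r - 1) + (a - 1) * n) div n = a - 1" using r n by (simp add: div_mult_self1)
  have m: "((r - 1) + (a - 1) * n) mod n = r - 1" using r n by simp
  have L: "ps n a r - 1 = (r - 1) + (a - 1) * n" using e by simp
  show "bk n (ps n a r) = a" unfolding bk_def L d using assms by simp
  show "lc n (ps n a r) = r" unfolding lc_def L m using assms by simp
qed

lemma F3: assumes "a \<in> {1..n}"
  shows "i \<in> {(a - 1) * n + 1 .. a * n} \<longleftrightarrow> i \<in> {1..n^2} \<and> bk n i = a"
proof
  assume i: "i \<in> {(a - 1) * n + 1 .. a * n}"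
  define r where "r = i - (a - 1) * n"
  obtain a' where a': "a = Suc a'" using assms by (cases a) auto
  have r: "r \<in> {1..n}" "i = ps n a r" unfolding r_def ps_def using i assms by (auto simp: a')
  then show "i \<in> {1..n^2} \<and> bk n i = a" using F2[OF assms r(1)] by simp
next
  assume i: "i \<in> {1..n^2} \<and> bk n i = a"
  have n: "n > 0" using assms by simp
  have "i = ps n a (lc n i)" using F1[OF n] i by metis
  moreover have "lc n i \<in> {1..n}" using F1[OF n] i by blast
  ultimately show "i \<in> {(a - 1) * n + 1 .. a * n}" unfolding ps_def using assms
    by (cases a) (auto simp: algebra_simps)
qed

definition Blk :: "nat \<Rightarrow> (nat \<Rightarrow> nat \<Rightarrow> bool) \<Rightarrow> nat \<Rightarrow> nat \<Rightarrow> (nat \<times> nat) set" where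
  "Blk n A a b = {(i, j). i \<in> {(a - 1) * n + 1 .. a * n} \<and> j \<in> {(b - 1) * n + 1 .. b * n} \<and> A i j}"

lemma Blk_eq: assumes "a \<in> {1..n}" "b \<in> {1..n}"
  shows "Blk n A a b = {(i, j). i \<in> {1..n^2} \<and> bk n i = a \<and> j \<in> {1..n^2} \<and> bk n j = b \<and> A i j}"
  unfolding Blk_def using F3[OF assms(1)] F3[OF assms(2)] by blast

definition fS :: "nat \<Rightarrow> (nat \<Rightarrow> nat \<Rightarrow> bool) \<Rightarrow> nat \<Rightarrow> nat \<Rightarrow> nat \<times> nat" where
  "fS n A = (\<lambda>a b. if a \<in> {1..n} \<and> b \<in> {1..n} then (lc n (fst (the_elem (Blk n A a b))), lc n (snd (the_elem (Blk n A a b)))) else (0, 0))"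

definition gS :: "nat \<Rightarrow> (nat \<Rightarrow> nat \<Rightarrow> nat \<times> nat) \<Rightarrow> nat \<Rightarrow> nat \<Rightarrow> bool" where
  "gS n M = (\<lambda>i j. i \<in> {1..n^2} \<and> j \<in> {1..n^2} \<and> M (bk n i) (bk n j) = (lc n i, lc n j))"

lemma card1_eq: assumes "card S = 1" "x \<in> S" "y \<in> S" shows "x = y"
  using assms by (metis card_1_singletonE singletonD)

lemma S1: assumes A: "A \<in> Sigma_mats n" and ab: "a \<in> {1..n}" "b \<in> {1..n}"
  shows "\<exists>r\<in>{1..n}. \<exists>c\<in>{1..n}. Blk n A a b = {(ps n a r, ps n b c)} \<and> fS n A a b = (r, c) \<and> A (ps n a r) (ps n b c)"
proof -
  have n: "n > 0" using ab by simp
  have "card (Blk n A a b) = 1" using A ab unfolding Sigma_mats_def Blk_def by blast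
  then obtain x where x: "Blk n A a b = {x}" by (rule card_1_singletonE)
  obtain i j where ij: "x = (i, j)" by (cases x)
  have "(i, j) \<in> Blk n A a b" using x ij by simp
  then have ij2: "i \<in> {1..n^2}" "bk n i = a" "j \<in> {1..n^2}" "bk n j = b" "A i j" using Blk_eq[OF ab] by auto
  have pi: "ps n a (lc n i) = i" using F1[OF n ij2(1)] ij2(2) by simp
  have pj: "ps n b (lc n j) = j" using F1[OF n ij2(3)] ij2(4) by simp
  have "fS n A a b = (lc n i, lc n j)" unfolding fS_def using ab x ij by simp
  then show ?thesis using F1(2)[OF n ij2(1)] F1(2)[OF n ij2(3)] x ij pi pj ij2(5) by metis
qed

lemma Sigma_char: assumes A: "A \<in> Sigma_mats n" and n: "n > 0"
  shows "A i j \<longleftrightarrow> gS n (fS n A) i j"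
proof
  have bm: "\<forall>i j. A i j \<longrightarrow> i \<in> {1..n^2} \<and> j \<in> {1..n^2}" using A unfolding Sigma_mats_def binmats_def by blast
  assume Aij: "A i j"
  then have ij: "i \<in> {1..n^2}" "j \<in> {1..n^2}" using bm by auto
  define a b where "a = bk n i" "b = bk n j"
  have ab: "a \<in> {1..n}" "b \<in> {1..n}" using F1[OF n ij(1)] F1[OF n ij(2)] a_b_def by auto
  obtain r c where rc: "r \<in> {1..n}" "c \<in> {1..n}" "Blk n A a b = {(ps n a r, ps n b c)}" "fS n A a b = (r, c)"
    using S1[OF A ab] by blast
  have "(i, j) \<in> Blk n A a b" using Blk_eq[OF ab] ij Aij a_b_def by auto
  then have "i = ps n a r" "j = ps n b c" using rc(3) by auto
  then have "lc n i = r" "lc n j = c" using F2 ab rc by auto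
  then show "gS n (fS n A) i j" unfolding gS_def using ij rc(4) a_b_def by simp
next
  assume g: "gS n (fS n A) i j"
  then have ij: "i \<in> {1..n^2}" "j \<in> {1..n^2}" "fS n A (bk n i) (bk n j) = (lc n i, lc n j)" unfolding gS_def by auto
  define a b where "a = bk n i" "b = bk n j"
  have ab: "a \<in> {1..n}" "b \<in> {1..n}" using F1[OF n ij(1)] F1[OF n ij(2)] a_b_def by auto
  obtain r c where rc: "r \<in> {1..n}" "c \<in> {1..n}" "fS n A a b = (r, c)" "A (ps n a r) (ps n b c)"
    using S1[OF A ab] by blast
  have "lc n i = r" "lc n j = c" using rc(3) ij(3) a_b_def by auto
  then have "ps n a r = i" "ps n b c = j" using F1(3)[OF n ij(1)] F1(3)[OF n ij(2)] a_b_def by auto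
  then show "A i j" using rc(4) by simp
qed

lemma gS_Blk: assumes M: "M \<in> Pi_mats n" and ab: "a \<in> {1..n}" "b \<in> {1..n}"
  shows "Blk n (gS n M) a b = {(ps n a (fst (M a b)), ps n b (snd (M a b)))}"
proof -
  have n: "n > 0" using ab by simp
  have rc: "fst (M a b) \<in> {1..n}" "snd (M a b) \<in> {1..n}" using M ab unfolding Pi_mats_def by blast+
  show ?thesis
  proof (rule set_eqI)
    fix x :: "nat \<times> nat"
    obtain i j where x: "x = (i, j)" by (cases x)
    have "(i, j) \<in> Blk n (gS n M) a b \<longleftrightarrow> (i, j) = (ps n a (fst (M a b)), ps n b (snd (M a b)))"
    proof
      assume "(i, j) \<in> Blk n (gS n M) a b"
      then have ij: "i \<in> {1..n^2}" "bk n i = a" "j \<in> {1..n^2}" "bk n j = b" "M a b = (lc n i, lc n j)"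
        using Blk_eq[OF ab] unfolding gS_def by auto
      then show "(i, j) = (ps n a (fst (M a b)), ps n b (snd (M a b)))"
        using F1(3)[OF n ij(1)] F1(3)[OF n ij(3)] by simp
    next
      assume "(i, j) = (ps n a (fst (M a b)), ps n b (snd (M a b)))"
      then have ij: "i = ps n a (fst (M a b))" "j = ps n b (snd (M a b))" by auto
      show "(i, j) \<in> Blk n (gS n M) a b"
        unfolding Blk_eq[OF ab] gS_def ij using F2[OF ab(1) rc(1)] F2[OF ab(2) rc(2)] by simp
    qed
    then show "x \<in> Blk n (gS n M) a b \<longleftrightarrow> x \<in> {(ps n a (fst (M a b)), ps n b (snd (M a b)))}"
      using x by simp
  qed
qed

lemma gf: assumes "A \<in> Sigma_mats n" "n > 0" shows "gS n (fS n A) = A"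
  using Sigma_char[OF assms] by (intro ext) simp

lemma fg: assumes M: "M \<in> Pi_mats n" shows "fS n (gS n M) = M"
proof (intro ext)
  fix a b
  show "fS n (gS n M) a b = M a b"
  proof (cases "a \<in> {1..n} \<and> b \<in> {1..n}")
    case True
    then have ab: "a \<in> {1..n}" "b \<in> {1..n}" by auto
    have rc: "fst (M a b) \<in> {1..n}" "snd (M a b) \<in> {1..n}" using M ab unfolding Pi_mats_def by blast+
    show ?thesis unfolding fS_def gS_Blk[OF M ab] using True F2[OF ab(1) rc(1)] F2[OF ab(2) rc(2)] by simp
  next
    case False
    then show ?thesis using M unfolding fS_def Pi_mats_def by auto
  qed
qed

lemma inj_endo_bij: assumes "inj_on f {1..n}" "\<forall>x\<in>{1..n}. f x \<in> {1..(n::nat)}"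
  shows "bij_betw f {1..n} {1..n}"
proof -
  have "f ` {1..n} \<subseteq> {1..n}" using assms(2) by blast
  then have "f ` {1..n} = {1..n}" using endo_inj_surj[of "{1..n}" f] assms(1) by blast
  then show ?thesis unfolding bij_betw_def using assms(1) by blast
qed

lemma fS_Pi: assumes A: "A \<in> Sigma_mats n" shows "fS n A \<in> Pi_mats n"
proof -
  have rowc: "\<forall>i \<in> {1..n^2}. card {j \<in> {1..n^2}. A i j} = 1" using A unfolding Sigma_mats_def by blast
  have colc: "\<forall>j \<in> {1..n^2}. card {i \<in> {1..n^2}. A i j} = 1" using A unfolding Sigma_mats_def by blast
  have c1: "\<forall>i j. \<not> (i \<in> {1..n} \<and> j \<in> {1..n}) \<longrightarrow> fS n A i j = (0, 0)" unfolding fS_def by auto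
  have c2: "\<forall>a b. a \<in> {1..n} \<and> b \<in> {1..n} \<longrightarrow> fst (fS n A a b) \<in> {1..n} \<and> snd (fS n A a b) \<in> {1..n}"
  proof (intro allI impI)
    fix a b assume ab: "a \<in> {1..n} \<and> b \<in> {1..n}"
    then obtain r c where "r \<in> {1..n}" "c \<in> {1..n}" "fS n A a b = (r, c)" using S1[OF A] by blast
    then show "fst (fS n A a b) \<in> {1..n} \<and> snd (fS n A a b) \<in> {1..n}" by simp
  qed
  have c3: "\<forall>a \<in> {1..n}. bij_betw (\<lambda>b. fst (fS n A a b)) {1..n} {1..n}"
  proof
    fix a assume a: "a \<in> {1..n}"
    show "bij_betw (\<lambda>b. fst (fS n A a b)) {1..n} {1..n}"
    proof (rule inj_endo_bij)
      show "\<forall>x\<in>{1..n}. fst (fS n A a x) \<in> {1..n}" using c2 a by blast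
      show "inj_on (\<lambda>b. fst (fS n A a b)) {1..n}"
      proof (rule inj_onI)
        fix b b' assume b: "b \<in> {1..n}" "b' \<in> {1..n}" "fst (fS n A a b) = fst (fS n A a b')"
        obtain r c where rc: "r \<in> {1..n}" "c \<in> {1..n}" "fS n A a b = (r, c)" "A (ps n a r) (ps n b c)"
          using S1[OF A a b(1)] by blast
        obtain r' c' where rc': "r' \<in> {1..n}" "c' \<in> {1..n}" "fS n A a b' = (r', c')" "A (ps n a r') (ps n b' c')"
          using S1[OF A a b(2)] by blast
        have rr: "r' = r" using b(3) rc(3) rc'(3) by simp
        have i: "ps n a r \<in> {1..n^2}" using F2[OF a rc(1)] by blast
        have "ps n b c \<in> {j \<in> {1..n^2}. A (ps n a r) j}" using F2[OF b(1) rc(2)] rc(4) by simp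
        moreover have "ps n b' c' \<in> {j \<in> {1..n^2}. A (ps n a r) j}" using F2[OF b(2) rc'(2)] rc'(4) rr by simp
        ultimately have "ps n b c = ps n b' c'" by (rule card1_eq[OF rowc[rule_format, OF i]])
        then show "b = b'" using F2(2)[OF b(1) rc(2)] F2(2)[OF b(2) rc'(2)] by metis
      qed
    qed
  qed
  have c4: "\<forall>b \<in> {1..n}. bij_betw (\<lambda>a. snd (fS n A a b)) {1..n} {1..n}"
  proof
    fix b assume b: "b \<in> {1..n}"
    show "bij_betw (\<lambda>a. snd (fS n A a b)) {1..n} {1..n}"
    proof (rule inj_endo_bij)
      show "\<forall>x\<in>{1..n}. snd (fS n A x b) \<in> {1..n}" using c2 b by blast
      show "inj_on (\<lambda>a. snd (fS n A a b)) {1..n}"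
      proof (rule inj_onI)
        fix a a' assume a: "a \<in> {1..n}" "a' \<in> {1..n}" "snd (fS n A a b) = snd (fS n A a' b)"
        obtain r c where rc: "r \<in> {1..n}" "c \<in> {1..n}" "fS n A a b = (r, c)" "A (ps n a r) (ps n b c)"
          using S1[OF A a(1) b] by blast
        obtain r' c' where rc': "r' \<in> {1..n}" "c' \<in> {1..n}" "fS n A a' b = (r', c')" "A (ps n a' r') (ps n b c')"
          using S1[OF A a(2) b] by blast
        have cc: "c' = c" using a(3) rc(3) rc'(3) by simp
        have j: "ps n b c \<in> {1..n^2}" using F2[OF b rc(2)] by blast
        have "ps n a r \<in> {i \<in> {1..n^2}. A i (ps n b c)}" using F2[OF a(1) rc(1)] rc(4) by simp
        moreover have "ps n a' r' \<in> {i \<in> {1..n^2}. A i (ps n b c)}" using F2[OF a(2) rc'(1)] rc'(4) cc by simp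
        ultimately have "ps n a r = ps n a' r'" by (rule card1_eq[OF colc[rule_format, OF j]])
        then show "a = a'" using F2(2)[OF a(1) rc(1)] F2(2)[OF a(2) rc'(1)] by metis
      qed
    qed
  qed
  show ?thesis unfolding Pi_mats_def using c1 c2 c3 c4 by blast
qed

lemma gS_Sigma: assumes M: "M \<in> Pi_mats n" and n: "n > 0" shows "gS n M \<in> Sigma_mats n"
proof -
  have rb: "\<forall>a \<in> {1..n}. bij_betw (\<lambda>b. fst (M a b)) {1..n} {1..n}" using M unfolding Pi_mats_def by blast
  have cb: "\<forall>b \<in> {1..n}. bij_betw (\<lambda>a. snd (M a b)) {1..n} {1..n}" using M unfolding Pi_mats_def by blast
  have inr: "\<And>a b. a \<in> {1..n} \<Longrightarrow> b \<in> {1..n} \<Longrightarrow> fst (M a b) \<in> {1..n} \<and> snd (M a b) \<in> {1..n}"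
    using M unfolding Pi_mats_def by blast
  have b0: "gS n M \<in> binmats (n^2)" unfolding binmats_def gS_def by auto
  have rows: "\<forall>i \<in> {1..n^2}. card {j \<in> {1..n^2}. gS n M i j} = 1"
  proof
    fix i assume i: "i \<in> {1..n^2}"
    define a r where "a = bk n i" "r = lc n i"
    have ar: "a \<in> {1..n}" "r \<in> {1..n}" using F1[OF n i] a_r_def by auto
    have bj: "bij_betw (\<lambda>b. fst (M a b)) {1..n} {1..n}" using rb ar by blast
    have "r \<in> (\<lambda>b. fst (M a b)) ` {1..n}" using bij_betw_imp_surj_on[OF bj] ar(2) by simp
    then obtain b where b: "b \<in> {1..n}" "fst (M a b) = r" by (auto simp del: atLeastAtMost_iff)
    define c where "c = snd (M a b)"
    have c: "c \<in> {1..n}" using inr[OF ar(1) b(1)] c_def by simp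
    have "{j \<in> {1..n^2}. gS n M i j} = {ps n b c}"
    proof (rule set_eqI, rule iffI)
      fix j assume "j \<in> {j \<in> {1..n^2}. gS n M i j}"
      then have j: "j \<in> {1..n^2}" "M a (bk n j) = (r, lc n j)" unfolding gS_def a_r_def by auto
      have "bk n j \<in> {1..n}" using F1[OF n j(1)] by blast
      moreover have "fst (M a (bk n j)) = fst (M a b)" using j(2) b(2) by simp
      ultimately have "bk n j = b" using inj_onD[OF bij_betw_imp_inj_on[OF bj]] b(1) by blast
      moreover have "lc n j = c" using j(2) c_def \<open>bk n j = b\<close> by simp
      ultimately show "j \<in> {ps n b c}" using F1(3)[OF n j(1)] by simp
    next
      fix j assume "j \<in> {ps n b c}"
      then have j: "j = ps n b c" by simp
      have "M a b = (r, c)" using b(2) c_def by (simp add: prod_eq_iff)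
      then show "j \<in> {j \<in> {1..n^2}. gS n M i j}"
        unfolding j gS_def using F2[OF b(1) c] i a_r_def by simp
    qed
    then show "card {j \<in> {1..n^2}. gS n M i j} = 1" by simp
  qed
  have cols: "\<forall>j \<in> {1..n^2}. card {i \<in> {1..n^2}. gS n M i j} = 1"
  proof
    fix j assume j: "j \<in> {1..n^2}"
    define b c where "b = bk n j" "c = lc n j"
    have bc: "b \<in> {1..n}" "c \<in> {1..n}" using F1[OF n j] b_c_def by auto
    have bj: "bij_betw (\<lambda>a. snd (M a b)) {1..n} {1..n}" using cb bc by blast
    have "c \<in> (\<lambda>a. snd (M a b)) ` {1..n}" using bij_betw_imp_surj_on[OF bj] bc(2) by simp
    then obtain a where a: "a \<in> {1..n}" "snd (M a b) = c" by (auto simp del: atLeastAtMost_iff)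
    define r where "r = fst (M a b)"
    have r: "r \<in> {1..n}" using inr[OF a(1) bc(1)] r_def by simp
    have "{i \<in> {1..n^2}. gS n M i j} = {ps n a r}"
    proof (rule set_eqI, rule iffI)
      fix i assume "i \<in> {i \<in> {1..n^2}. gS n M i j}"
      then have i: "i \<in> {1..n^2}" "M (bk n i) b = (lc n i, c)" unfolding gS_def b_c_def by auto
      have "bk n i \<in> {1..n}" using F1[OF n i(1)] by blast
      moreover have "snd (M (bk n i) b) = snd (M a b)" using i(2) a(2) by simp
      ultimately have "bk n i = a" using inj_onD[OF bij_betw_imp_inj_on[OF bj]] a(1) by blast
      moreover have "lc n i = r" using i(2) r_def \<open>bk n i = a\<close> by simp
      ultimately show "i \<in> {ps n a r}" using F1(3)[OF n i(1)] by simp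
    next
      fix i assume "i \<in> {ps n a r}"
      then have i: "i = ps n a r" by simp
      have "M a b = (r, c)" using a(2) r_def by (simp add: prod_eq_iff)
      then show "i \<in> {i \<in> {1..n^2}. gS n M i j}"
        unfolding i gS_def using F2[OF a(1) r] j b_c_def by simp
    qed
    then show "card {i \<in> {1..n^2}. gS n M i j} = 1" by simp
  qed
  have blocks: "\<forall>a \<in> {1..n}. \<forall>b \<in> {1..n}.
          card {(i, j). i \<in> {(a - 1) * n + 1 .. a * n} \<and> j \<in> {(b - 1) * n + 1 .. b * n} \<and> gS n M i j} = 1"
  proof (intro ballI)
    fix a b assume "a \<in> {1..n}" "b \<in> {1..n}"
    from gS_Blk[OF M this] show "card {(i, j). i \<in> {(a - 1) * n + 1 .. a * n} \<and> j \<in> {(b - 1) * n + 1 .. b * n} \<and> gS n M i j} = 1"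
      unfolding Blk_def by (simp only: is_singleton_altdef[symmetric] card_1_singleton_iff) auto
  qed
  show ?thesis unfolding Sigma_mats_def using b0 rows cols blocks by blast
qed

lemma card_Sigma: assumes "n > 0" shows "card (Sigma_mats n) = card (Pi_mats n)"
proof -
  have "bij_betw (fS n) (Sigma_mats n) (Pi_mats n)"
  proof (rule bij_betw_byWitness[where f'="gS n"])
    show "\<forall>a\<in>Sigma_mats n. gS n (fS n a) = a" using gf assms by blast
    show "\<forall>a'\<in>Pi_mats n. fS n (gS n a') = a'" using fg by blast
    show "fS n ` Sigma_mats n \<subseteq> Pi_mats n" using fS_Pi by blast
    show "gS n ` Pi_mats n \<subseteq> Sigma_mats n" using gS_Sigma assms by blast
  qed
  then show ?thesis by (rule bij_betw_same_card)
qed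


theorem mainTheorem4:
  fixes n :: nat
  assumes "n \<ge> 2"
  shows "q n 0 = fact n ^ (2 * n) \<and> q n 1 = fact n ^ (2 * n)
       \<and> card (Pi_mats n) = fact n ^ (2 * n) \<and> card (Sigma_mats n) = fact n ^ (2 * n)"
  using q0[OF assms] q1[OF assms] card_Pi_mats[of n] card_Sigma[of n] assms by simp

end
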